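(* Let $K\ge1$ and let $\mathfrak{L}\subset\mathcal{P}^2_K(X)$ be a $\mathfrak{Q}_L$-clusterable family. Then for every $\Gamma\in\mathcal{M}(\mathfrak{L})$ the Bayes optimal partition is well-defined: there is a unique $\Lambda\in\mathfrak{L}$ with $m(\Lambda)=\Gamma$, and hence a unique Bayes optimal partition $\pi_\Gamma:=\pi_\Lambda$.
   Context: $X$ is a compact metric space and all probability measures are absolutely continuous w.r.t. a base measure $\zeta$. $\mathcal{P}(X)$: regular Borel probability measures with finite $r$-th moments with Hellinger metric $\rho$; $\mathcal{P}^2_s(X)$: probability measures on $\mathcal{P}(X)$ with at most $s$ atoms; $m(\Lambda)=\sum_k\lambda_k\gamma_k$; $\mathcal{M}(\mathfrak{L})=\{m(\Lambda):\Lambda\in\mathfrak{L}\}$. For $\Lambda=\sum_{k=1}^K\lambda_k\delta_{\gamma_k}$ with $f_k$ the density of $\gamma_k$, $c_\Lambda(x)=\arg\max_k\lambda_kf_k(x)$ on $X_0=X\setminus E_0$, $E_0=\bigcup_{i\ne j}\{x:\lambda_if_i(x)=\lambda_jf_j(x)\}$; the Bayes optimal partition $\pi_\Lambda$ of $X_0$ is the partition into classes of the relation $x\sim y\iff c_\Lambda(x)=c_\Lambda(y)$. Fixed base family $\mathfrak{Q}$ with $\mathfrak{Q}_L=\mathfrak{Q}\cap\mathcal{P}^2_L(X)$, $\mathcal{M}(\mathfrak{Q}_L)$ identifiable. $T_L\Gamma$: minimizers of $\rho(Q,\Gamma)$ over $\mathcal{M}(\mathfrak{Q}_L)$ (assumed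 unique for $\Gamma\in\mathcal{M}(\mathfrak{L})$), with mixing measure $\Omega^*=M_L(T_L\Gamma)=\sum_\ell\omega^*_\ell\delta_{q^*_\ell}$, $M_L(\mathfrak{L})=\{M_L(T_Lm(\Lambda)):\Lambda\in\mathfrak{L}\}$. For $\alpha:[L]\to[K]$: $\bar\omega^*_k(\alpha)=\sum_{\ell\in\alpha^{-1}(k)}\omega^*_\ell$, $Q^*_k(\alpha)=\bar\omega^*_k(\alpha)^{-1}\sum_{\ell\in\alpha^{-1}(k)}\omega^*_\ell q^*_\ell$. $\Lambda$ is $\mathfrak{Q}_L$-regular if the projections exist uniquely for large $L$ and converge to $m(\Lambda)$, and some sequence $\alpha_L:[L]\to[K]$ ($\Lambda$-regular) has $Q^*_k(\alpha_L)\to\gamma_k$, $\bar\omega^*_k(\alpha_L)\to\lambda_k$. $\mathfrak{L}$ is $\mathfrak{Q}_L$-clusterable if all members are regular and there are functions $\chi_L:M_L(\mathfrak{L})\to\{[L]\to[K]\}$ with $\chi_L(M_L(T_Lm(\Lambda)))$ $\Lambda$-regular for every $\Lambda\in\mathfrak{L}$. *)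

theory Defs
  imports "HOL-Probability.Probability"
begin

text \<open>Mixing measures (elements of P^2(X)) are represented as pmfs on measures.\<close>

definition base_measure :: "'x::metric_space set \<Rightarrow> 'x measure \<Rightarrow> bool" where
  "base_measure X \<zeta> \<longleftrightarrow> compact X \<and> space \<zeta> = X \<and>
     sets \<zeta> = sets (restrict_space borel X) \<and> sigma_finite_measure \<zeta>"

text \<open>P(X): probability measures on X, absolutely continuous w.r.t. zeta.
(On a compact metric space finite Borel measures are regular and have finite
moments of every order.)\<close>
definition PX :: "'x measure \<Rightarrow> 'x measure set" where
  "PX \<zeta> = {\<mu>. prob_space \<mu> \<and> sets \<mu> = sets \<zeta> \<and> absolutely_continuous \<zeta> \<mu>}"

definition dens :: "'x measure \<Rightarrow> 'x measure \<Rightarrow> 'x \<Rightarrow> real" where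
  "dens \<zeta> \<mu> x = enn2real (RN_deriv \<zeta> \<mu> x)"

definition hellinger :: "'x measure \<Rightarrow> 'x measure \<Rightarrow> 'x measure \<Rightarrow> real" where
  "hellinger \<zeta> P Q =
     sqrt ((1/2) * (\<integral>x. (sqrt (dens \<zeta> P x) - sqrt (dens \<zeta> Q x))\<^sup>2 \<partial>\<zeta>))"

definition P2 :: "'x measure \<Rightarrow> nat \<Rightarrow> 'x measure pmf set" where
  "P2 \<zeta> s = {\<Lambda>. finite (set_pmf \<Lambda>) \<and> card (set_pmf \<Lambda>) \<le> s \<and> set_pmf \<Lambda> \<subseteq> PX \<zeta>}"

definition mix :: "'x measure \<Rightarrow> 'x measure pmf \<Rightarrow> 'x measure" where
  "mix \<zeta> \<Lambda> = measure_of (space \<zeta>) (sets \<zeta>)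
     (\<lambda>A. \<Sum>\<mu>\<in>set_pmf \<Lambda>. ennreal (pmf \<Lambda> \<mu>) * emeasure \<mu> A)"

definition QL :: "'x measure \<Rightarrow> 'x measure pmf set \<Rightarrow> nat \<Rightarrow> 'x measure pmf set" where
  "QL \<zeta> \<Q> L = \<Q> \<inter> P2 \<zeta> L"

definition minimizers :: "'x measure \<Rightarrow> 'x measure pmf set \<Rightarrow> nat \<Rightarrow> 'x measure \<Rightarrow> 'x measure set" where
  "minimizers \<zeta> \<Q> L \<Gamma> = {Q \<in> mix \<zeta> ` QL \<zeta> \<Q> L.
       \<forall>Q' \<in> mix \<zeta> ` QL \<zeta> \<Q> L. hellinger \<zeta> Q \<Gamma> \<le> hellinger \<zeta> Q' \<Gamma>}"

text \<open>T_L Gamma (meaningful when the minimizer is unique).\<close>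
definition TL :: "'x measure \<Rightarrow> 'x measure pmf set \<Rightarrow> nat \<Rightarrow> 'x measure \<Rightarrow> 'x measure" where
  "TL \<zeta> \<Q> L \<Gamma> = (THE Q. Q \<in> minimizers \<zeta> \<Q> L \<Gamma>)"

definition Mproj :: "'x measure \<Rightarrow> 'x measure pmf set \<Rightarrow> nat \<Rightarrow> 'x measure \<Rightarrow> 'x measure pmf" where
  "Mproj \<zeta> \<Q> L Q = (THE \<Omega>. \<Omega> \<in> QL \<zeta> \<Q> L \<and> mix \<zeta> \<Omega> = Q)"

text \<open>A labelled representation of a mixing measure over the index set [n]:
 Lambda = sum_(k<n) w_k delta_(g_k).\<close>
definition labels :: "'x measure \<Rightarrow> nat \<Rightarrow> 'x measure pmf \<Rightarrow> (nat \<Rightarrow> real) \<Rightarrow> (nat \<Rightarrow> 'x measure) \<Rightarrow> bool" where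
  "labels \<zeta> n \<Lambda> w g \<longleftrightarrow> (\<forall>k<n. w k \<ge> 0 \<and> g k \<in> PX \<zeta>) \<and>
     (\<forall>\<mu>. pmf \<Lambda> \<mu> = (\<Sum>k\<in>{k. k < n \<and> g k = \<mu>}. w k))"

text \<open>A clustering datum at level L: a labelling (omega*, q*) of Omega* over [L]
together with a map alpha : [L] -> [K].\<close>
type_synonym 'x clustering = "(nat \<Rightarrow> real) \<times> (nat \<Rightarrow> 'x measure) \<times> (nat \<Rightarrow> nat)"

definition wbar :: "'x clustering \<Rightarrow> nat \<Rightarrow> nat \<Rightarrow> real" where
  "wbar c L k = (case c of (\<omega>, q, \<alpha>) \<Rightarrow> \<Sum>j\<in>{j. j < L \<and> \<alpha> j = k}. \<omega> j)"

definition Qstar :: "'x measure \<Rightarrow> 'x clustering \<Rightarrow> nat \<Rightarrow> nat \<Rightarrow> 'x measure" where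
  "Qstar \<zeta> c L k = (case c of (\<omega>, q, \<alpha>) \<Rightarrow>
     measure_of (space \<zeta>) (sets \<zeta>)
       (\<lambda>A. \<Sum>j\<in>{j. j < L \<and> \<alpha> j = k}. ennreal (\<omega> j / wbar c L k) * emeasure (q j) A))"

definition OmegaStar :: "'x measure \<Rightarrow> 'x measure pmf set \<Rightarrow> nat \<Rightarrow> 'x measure pmf \<Rightarrow> 'x measure pmf" where
  "OmegaStar \<zeta> \<Q> L \<Lambda> = Mproj \<zeta> \<Q> L (TL \<zeta> \<Q> L (mix \<zeta> \<Lambda>))"

definition regular_seq :: "'x measure \<Rightarrow> 'x measure pmf set \<Rightarrow> nat \<Rightarrow> 'x measure pmf \<Rightarrow> (nat \<Rightarrow> 'x clustering) \<Rightarrow> bool" where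
  "regular_seq \<zeta> \<Q> K \<Lambda> c \<longleftrightarrow>
     (\<exists>wt \<gamma>. labels \<zeta> K \<Lambda> wt \<gamma> \<and>
        (\<forall>\<^sub>F L in sequentially. (case c L of (\<omega>, q, \<alpha>) \<Rightarrow>
            labels \<zeta> L (OmegaStar \<zeta> \<Q> L \<Lambda>) \<omega> q \<and> (\<forall>j<L. \<alpha> j < K))) \<and>
        (\<forall>k<K. ((\<lambda>L. hellinger \<zeta> (Qstar \<zeta> (c L) L k) (\<gamma> k)) \<longlonglongrightarrow> 0) \<and>
               ((\<lambda>L. wbar (c L) L k) \<longlonglongrightarrow> wt k)))"

definition regular :: "'x measure \<Rightarrow> 'x measure pmf set \<Rightarrow> nat \<Rightarrow> 'x measure pmf \<Rightarrow> bool" where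
  "regular \<zeta> \<Q> K \<Lambda> \<longleftrightarrow>
     (\<forall>\<^sub>F L in sequentially. \<exists>!Q. Q \<in> minimizers \<zeta> \<Q> L (mix \<zeta> \<Lambda>)) \<and>
     ((\<lambda>L. hellinger \<zeta> (TL \<zeta> \<Q> L (mix \<zeta> \<Lambda>)) (mix \<zeta> \<Lambda>)) \<longlonglongrightarrow> 0) \<and>
     (\<exists>c. regular_seq \<zeta> \<Q> K \<Lambda> c)"

definition clusterable :: "'x measure \<Rightarrow> 'x measure pmf set \<Rightarrow> nat \<Rightarrow> 'x measure pmf set \<Rightarrow> bool" where
  "clusterable \<zeta> \<Q> K \<LL> \<longleftrightarrow> (\<forall>\<Lambda>\<in>\<LL>. regular \<zeta> \<Q> K \<Lambda>) \<and>
     (\<exists>(chi::nat \<Rightarrow> 'x measure pmf \<Rightarrow> 'x clustering).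
        \<forall>\<Lambda>\<in>\<LL>. regular_seq \<zeta> \<Q> K \<Lambda> (\<lambda>L. chi L (OmegaStar \<zeta> \<Q> L \<Lambda>)))"

text \<open>Bayes optimal partition pi_Lambda (atoms of Lambda play the role of the labels k).\<close>
definition E0 :: "'x measure \<Rightarrow> 'x measure pmf \<Rightarrow> 'x set" where
  "E0 \<zeta> \<Lambda> = {x \<in> space \<zeta>. \<exists>\<mu>\<in>set_pmf \<Lambda>. \<exists>\<nu>\<in>set_pmf \<Lambda>. \<mu> \<noteq> \<nu> \<and>
       pmf \<Lambda> \<mu> * dens \<zeta> \<mu> x = pmf \<Lambda> \<nu> * dens \<zeta> \<nu> x}"

definition bayes_class :: "'x measure \<Rightarrow> 'x measure pmf \<Rightarrow> 'x \<Rightarrow> 'x measure" where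
  "bayes_class \<zeta> \<Lambda> x = (THE \<mu>. \<mu> \<in> set_pmf \<Lambda> \<and>
       (\<forall>\<nu>\<in>set_pmf \<Lambda>. pmf \<Lambda> \<nu> * dens \<zeta> \<nu> x \<le> pmf \<Lambda> \<mu> * dens \<zeta> \<mu> x))"

definition bayes_partition :: "'x measure \<Rightarrow> 'x measure pmf \<Rightarrow> 'x set set" where
  "bayes_partition \<zeta> \<Lambda> = (let X0 = space \<zeta> - E0 \<zeta> \<Lambda> in
     X0 // {(x, y). x \<in> X0 \<and> y \<in> X0 \<and> bayes_class \<zeta> \<Lambda> x = bayes_class \<zeta> \<Lambda> y})"

end

theory Submission imports Defs begin

lemma dens_integrable:
  assumes sf: "sigma_finite_measure \<zeta>" and fin: "finite_measure N"
    and ac: "absolutely_continuous \<zeta> N" and s: "sets N = sets \<zeta>"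
  shows "integrable \<zeta> (dens \<zeta> N)"
proof -
  interpret sigma_finite_measure \<zeta> by fact
  interpret N: finite_measure N by fact
  have "integrable N (\<lambda>_. 1::real)" by simp
  then have "integrable \<zeta> (\<lambda>x. enn2real (RN_deriv \<zeta> N x) * 1)"
    using RN_deriv_integrable[OF N.sigma_finite_measure_axioms ac s, of "\<lambda>_. 1"] by simp
  then show ?thesis unfolding dens_def by simp
qed

lemma dens_density:
  assumes sf: "sigma_finite_measure \<zeta>" and fin: "sigma_finite_measure N"
    and ac: "absolutely_continuous \<zeta> N" and s: "sets N = sets \<zeta>"
  shows "N = density \<zeta> (\<lambda>x. ennreal (dens \<zeta> N x))"
proof -
  interpret sigma_finite_measure \<zeta> by fact
  have "N = density \<zeta> (RN_deriv \<zeta> N)" using density_RN_deriv[OF ac s] by simp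
  also have "\<dots> = density \<zeta> (\<lambda>x. ennreal (dens \<zeta> N x))"
  proof (rule density_cong)
    from RN_deriv_finite[OF fin ac s]
    show "AE x in \<zeta>. RN_deriv \<zeta> N x = ennreal (dens \<zeta> N x)"
      unfolding dens_def by eventually_elim (auto simp: less_top)
  qed (auto simp: dens_def)
  finally show ?thesis .
qed

lemma mixmeas:
  fixes c :: "'j \<Rightarrow> real" and q :: "'j \<Rightarrow> 'x measure"
  assumes J: "finite J" and q: "\<forall>j\<in>J. q j \<in> PX \<zeta>"
  defines "M \<equiv> measure_of (space \<zeta>) (sets \<zeta>) (\<lambda>A. \<Sum>j\<in>J. ennreal (c j) * emeasure (q j) A)"
  shows "sets M = sets \<zeta>" "finite_measure M" "absolutely_continuous \<zeta> M"
proof -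
  have sq: "\<And>j. j \<in> J \<Longrightarrow> sets (q j) = sets \<zeta>" and pq: "\<And>j. j \<in> J \<Longrightarrow> prob_space (q j)"
   and acq: "\<And>j. j \<in> J \<Longrightarrow> absolutely_continuous \<zeta> (q j)"
    using q by (auto simp: PX_def)
  show ss: "sets M = sets \<zeta>" unfolding M_def by simp
  have sa: "sigma_algebra (space \<zeta>) (sets \<zeta>)" by (rule sets.sigma_algebra_axioms)
  have pos: "positive (sets \<zeta>) (\<lambda>A. \<Sum>j\<in>J. ennreal (c j) * emeasure (q j) A)"
    by (simp add: positive_def)
  have ca: "countably_additive (sets \<zeta>) (\<lambda>A. \<Sum>j\<in>J. ennreal (c j) * emeasure (q j) A)"
    unfolding countably_additive_def
  proof (intro allI impI)
    fix A :: "nat \<Rightarrow> _" assume A: "range A \<subseteq> sets \<zeta>" "disjoint_family A" "\<Union> (range A) \<in> sets \<zeta>"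
    have "(\<Sum>i. \<Sum>j\<in>J. ennreal (c j) * emeasure (q j) (A i)) = (\<Sum>j\<in>J. \<Sum>i. ennreal (c j) * emeasure (q j) (A i))"
      by (rule suminf_sum) simp
    also have "\<dots> = (\<Sum>j\<in>J. ennreal (c j) * emeasure (q j) (\<Union> (range A)))"
    proof (rule sum.cong[OF refl])
      fix j assume j: "j \<in> J"
      have "(\<Sum>i. emeasure (q j) (A i)) = emeasure (q j) (\<Union> (range A))"
        proof -
        have "countably_additive (sets \<zeta>) (emeasure (q j))" using emeasure_countably_additive[of "q j"] sq[OF j] by simp
        then show ?thesis using A unfolding countably_additive_def by blast
      qed
      then show "(\<Sum>i. ennreal (c j) * emeasure (q j) (A i)) = ennreal (c j) * emeasure (q j) (\<Union> (range A))"
        by simp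
    qed
    finally show "(\<Sum>i. \<Sum>j\<in>J. ennreal (c j) * emeasure (q j) (A i)) = (\<Sum>j\<in>J. ennreal (c j) * emeasure (q j) (\<Union> (range A)))" .
  qed
  have em: "\<And>A. A \<in> sets \<zeta> \<Longrightarrow> emeasure M A = (\<Sum>j\<in>J. ennreal (c j) * emeasure (q j) A)"
    unfolding M_def by (rule emeasure_measure_of_sigma[OF sa pos ca])
  have sp: "space M = space \<zeta>" unfolding M_def by simp
  have "emeasure M (space M) = (\<Sum>j\<in>J. ennreal (c j) * emeasure (q j) (space \<zeta>))"
    using em sp by simp
  also have "\<dots> < \<infinity>"
  proof -
    have "\<And>j. j \<in> J \<Longrightarrow> ennreal (c j) * emeasure (q j) (space \<zeta>) < \<infinity>"
    proof -
      fix j assume j: "j \<in> J"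
      interpret prob_space "q j" using pq[OF j] .
      have "space (q j) = space \<zeta>" using sq[OF j] by (rule sets_eq_imp_space_eq)
      then show "ennreal (c j) * emeasure (q j) (space \<zeta>) < \<infinity>"
        using emeasure_space_1 by (simp add: ennreal_mult_less_top)
    qed
    then show ?thesis using J by (simp add: ennreal_sum_less_top)
  qed
  finally show "finite_measure M" by (intro finite_measureI) simp
  show "absolutely_continuous \<zeta> M"
    unfolding absolutely_continuous_def
  proof
    fix A assume "A \<in> null_sets \<zeta>"
    then have A: "A \<in> sets \<zeta>" "emeasure \<zeta> A = 0" by auto
    have "\<And>j. j \<in> J \<Longrightarrow> emeasure (q j) A = 0"
      using acq A \<open>A \<in> null_sets \<zeta>\<close> sq unfolding absolutely_continuous_def by (auto simp: null_sets_def)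
    then have "emeasure M A = 0" using em[OF A(1)] by simp
    then show "A \<in> null_sets M" using A ss by auto
  qed
qed


lemma dens_nonneg: "0 \<le> dens \<zeta> N x" unfolding dens_def by simp

lemma dens_meas[measurable]: "dens \<zeta> N \<in> borel_measurable \<zeta>" unfolding dens_def by measurable

lemma hint:
  assumes "integrable \<zeta> (dens \<zeta> N)" "integrable \<zeta> (dens \<zeta> N')"
  shows "integrable \<zeta> (\<lambda>x. (sqrt (dens \<zeta> N x) - sqrt (dens \<zeta> N' x))\<^sup>2)"
proof (rule Bochner_Integration.integrable_bound[OF Bochner_Integration.integrable_add[OF assms]])
  show "(\<lambda>x. (sqrt (dens \<zeta> N x) - sqrt (dens \<zeta> N' x))\<^sup>2) \<in> borel_measurable \<zeta>" by measurable
  show "AE x in \<zeta>. norm ((sqrt (dens \<zeta> N x) - sqrt (dens \<zeta> N' x))\<^sup>2) \<le> norm (dens \<zeta> N x + dens \<zeta> N' x)"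
  proof (rule AE_I2)
    fix x
    have a: "0 \<le> dens \<zeta> N x" "0 \<le> dens \<zeta> N' x" by (rule dens_nonneg)+
    have "(sqrt (dens \<zeta> N x) - sqrt (dens \<zeta> N' x))\<^sup>2 = dens \<zeta> N x + dens \<zeta> N' x - 2 * sqrt (dens \<zeta> N x) * sqrt (dens \<zeta> N' x)"
      using a by (simp add: power2_diff)
    also have "\<dots> \<le> dens \<zeta> N x + dens \<zeta> N' x" using a by simp
    finally show "norm ((sqrt (dens \<zeta> N x) - sqrt (dens \<zeta> N' x))\<^sup>2) \<le> norm (dens \<zeta> N x + dens \<zeta> N' x)"
      using a by simp
  qed
qed

lemma hell_sq:
  "(\<integral>x. (sqrt (dens \<zeta> P x) - sqrt (dens \<zeta> Q x))\<^sup>2 \<partial>\<zeta>) = 2 * (hellinger \<zeta> P Q)\<^sup>2"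
proof -
  have "0 \<le> (\<integral>x. (sqrt (dens \<zeta> P x) - sqrt (dens \<zeta> Q x))\<^sup>2 \<partial>\<zeta>)" by (rule integral_nonneg_AE) simp
  then show ?thesis unfolding hellinger_def by simp
qed

lemma good_integrable:
  assumes "sigma_finite_measure \<zeta>" "finite_measure N" "absolutely_continuous \<zeta> N" "sets N = sets \<zeta>"
  shows "integrable \<zeta> (dens \<zeta> N)"
  using dens_integrable assms by blast

lemma hell_lim_unique:
  assumes sf: "sigma_finite_measure \<zeta>" and g1: "g1 \<in> PX \<zeta>" and g2: "g2 \<in> PX \<zeta>"
    and ev: "\<forall>\<^sub>F L in sequentially. finite_measure (Q L) \<and> absolutely_continuous \<zeta> (Q L) \<and> sets (Q L) = sets \<zeta>"
    and l1: "(\<lambda>L. hellinger \<zeta> (Q L) g1) \<longlonglongrightarrow> 0"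
    and l2: "(\<lambda>L. hellinger \<zeta> (Q L) g2) \<longlonglongrightarrow> 0"
  shows "g1 = g2"
proof -
  have pg: "finite_measure g1" "absolutely_continuous \<zeta> g1" "sets g1 = sets \<zeta>"
     "finite_measure g2" "absolutely_continuous \<zeta> g2" "sets g2 = sets \<zeta>"
     "sigma_finite_measure g1" "sigma_finite_measure g2"
    using g1 g2 unfolding PX_def by (auto intro: prob_space.finite_measure finite_measure.sigma_finite_measure prob_space_imp_sigma_finite)
  have i1: "integrable \<zeta> (dens \<zeta> g1)" and i2: "integrable \<zeta> (dens \<zeta> g2)"
    using good_integrable[OF sf] pg by blast+
  define D where "D = (\<integral>x. (sqrt (dens \<zeta> g1 x) - sqrt (dens \<zeta> g2 x))\<^sup>2 \<partial>\<zeta>)"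
  have iD: "integrable \<zeta> (\<lambda>x. (sqrt (dens \<zeta> g1 x) - sqrt (dens \<zeta> g2 x))\<^sup>2)"
    by (rule hint[OF i1 i2])
  have evD: "\<forall>\<^sub>F L in sequentially. D \<le> 4 * (hellinger \<zeta> (Q L) g1)\<^sup>2 + 4 * (hellinger \<zeta> (Q L) g2)\<^sup>2"
    using ev
  proof eventually_elim
    case (elim L)
    have iq: "integrable \<zeta> (dens \<zeta> (Q L))" using good_integrable[OF sf] elim by blast
    have j1: "integrable \<zeta> (\<lambda>x. (sqrt (dens \<zeta> (Q L) x) - sqrt (dens \<zeta> g1 x))\<^sup>2)" by (rule hint[OF iq i1])
    have j2: "integrable \<zeta> (\<lambda>x. (sqrt (dens \<zeta> (Q L) x) - sqrt (dens \<zeta> g2 x))\<^sup>2)" by (rule hint[OF iq i2])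
    have "D \<le> (\<integral>x. 2 * (sqrt (dens \<zeta> (Q L) x) - sqrt (dens \<zeta> g1 x))\<^sup>2 + 2 * (sqrt (dens \<zeta> (Q L) x) - sqrt (dens \<zeta> g2 x))\<^sup>2 \<partial>\<zeta>)"
      unfolding D_def
    proof (rule integral_mono[OF iD])
      show "integrable \<zeta> (\<lambda>x. 2 * (sqrt (dens \<zeta> (Q L) x) - sqrt (dens \<zeta> g1 x))\<^sup>2 + 2 * (sqrt (dens \<zeta> (Q L) x) - sqrt (dens \<zeta> g2 x))\<^sup>2)"
        using j1 j2 by simp
      fix x
      show "(sqrt (dens \<zeta> g1 x) - sqrt (dens \<zeta> g2 x))\<^sup>2 \<le> 2 * (sqrt (dens \<zeta> (Q L) x) - sqrt (dens \<zeta> g1 x))\<^sup>2 + 2 * (sqrt (dens \<zeta> (Q L) x) - sqrt (dens \<zeta> g2 x))\<^sup>2"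
      proof -
        have "\<And>a b c::real. (b - c)\<^sup>2 \<le> 2 * (a - b)\<^sup>2 + 2 * (a - c)\<^sup>2"
        proof -
          fix a b c :: real
          have "0 \<le> (2*a - b - c)\<^sup>2" by simp
          then show "(b - c)\<^sup>2 \<le> 2 * (a - b)\<^sup>2 + 2 * (a - c)\<^sup>2" by (simp add: power2_eq_square algebra_simps)
        qed
        then show ?thesis .
      qed
    qed
    also have "\<dots> = 2 * (\<integral>x. (sqrt (dens \<zeta> (Q L) x) - sqrt (dens \<zeta> g1 x))\<^sup>2 \<partial>\<zeta>) + 2 * (\<integral>x. (sqrt (dens \<zeta> (Q L) x) - sqrt (dens \<zeta> g2 x))\<^sup>2 \<partial>\<zeta>)"
      using j1 j2 by simp
    also have "\<dots> = 4 * (hellinger \<zeta> (Q L) g1)\<^sup>2 + 4 * (hellinger \<zeta> (Q L) g2)\<^sup>2"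
      unfolding hell_sq by simp
    finally show ?case .
  qed
  have lim: "(\<lambda>L. 4 * (hellinger \<zeta> (Q L) g1)\<^sup>2 + 4 * (hellinger \<zeta> (Q L) g2)\<^sup>2) \<longlonglongrightarrow> 0"
    using tendsto_add[OF tendsto_mult[OF tendsto_const tendsto_power[OF l1]] tendsto_mult[OF tendsto_const tendsto_power[OF l2]], of 4 2 4 2]
    by simp
  have "D \<le> 0" by (rule tendsto_le[OF trivial_limit_sequentially lim tendsto_const evD])
  moreover have "0 \<le> D" unfolding D_def by (rule integral_nonneg_AE) simp
  ultimately have "D = 0" by simp
  then have "AE x in \<zeta>. (sqrt (dens \<zeta> g1 x) - sqrt (dens \<zeta> g2 x))\<^sup>2 = 0"
    unfolding D_def using integral_nonneg_eq_0_iff_AE[OF iD] by simp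
  then have ae: "AE x in \<zeta>. ennreal (dens \<zeta> g1 x) = ennreal (dens \<zeta> g2 x)"
    by eventually_elim simp
  have "g1 = density \<zeta> (\<lambda>x. ennreal (dens \<zeta> g1 x))" using dens_density[OF sf] pg by blast
  also have "\<dots> = density \<zeta> (\<lambda>x. ennreal (dens \<zeta> g2 x))" by (rule density_cong) (use ae in auto)
  also have "\<dots> = g2" using dens_density[OF sf] pg by metis
  finally show ?thesis .
qed


lemma main_unique:
  fixes X :: "'x::metric_space set" and \<zeta> :: "'x measure"
  assumes bm: "base_measure X \<zeta>" and cl: "clusterable \<zeta> \<Q> K \<LL>"
    and L1: "\<Lambda>1 \<in> \<LL>" and L2: "\<Lambda>2 \<in> \<LL>" and eq: "mix \<zeta> \<Lambda>1 = mix \<zeta> \<Lambda>2"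
  shows "\<Lambda>1 = \<Lambda>2"
proof -
  have sf: "sigma_finite_measure \<zeta>" using bm unfolding base_measure_def by simp
  obtain chi :: "nat \<Rightarrow> 'x measure pmf \<Rightarrow> 'x clustering" where
    chi: "\<forall>\<Lambda>\<in>\<LL>. regular_seq \<zeta> \<Q> K \<Lambda> (\<lambda>L. chi L (OmegaStar \<zeta> \<Q> L \<Lambda>))"
    using cl unfolding clusterable_def by blast
  define c where "c = (\<lambda>L. chi L (OmegaStar \<zeta> \<Q> L \<Lambda>1))"
  have om: "\<And>L. OmegaStar \<zeta> \<Q> L \<Lambda>2 = OmegaStar \<zeta> \<Q> L \<Lambda>1"
    unfolding OmegaStar_def eq ..
  have r1: "regular_seq \<zeta> \<Q> K \<Lambda>1 c" using chi L1 unfolding c_def by blast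
  have r2: "regular_seq \<zeta> \<Q> K \<Lambda>2 c" using chi L2 unfolding c_def om[symmetric] by blast
  obtain wt1 \<gamma>1 where lab1: "labels \<zeta> K \<Lambda>1 wt1 \<gamma>1"
    and ev1: "\<forall>\<^sub>F L in sequentially. (case c L of (\<omega>, q, \<alpha>) \<Rightarrow>
            labels \<zeta> L (OmegaStar \<zeta> \<Q> L \<Lambda>1) \<omega> q \<and> (\<forall>j<L. \<alpha> j < K))"
    and h1: "\<forall>k<K. ((\<lambda>L. hellinger \<zeta> (Qstar \<zeta> (c L) L k) (\<gamma>1 k)) \<longlonglongrightarrow> 0) \<and>
               ((\<lambda>L. wbar (c L) L k) \<longlonglongrightarrow> wt1 k)"
    using r1 unfolding regular_seq_def by blast
  obtain wt2 \<gamma>2 where lab2: "labels \<zeta> K \<Lambda>2 wt2 \<gamma>2"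
    and h2: "\<forall>k<K. ((\<lambda>L. hellinger \<zeta> (Qstar \<zeta> (c L) L k) (\<gamma>2 k)) \<longlonglongrightarrow> 0) \<and>
               ((\<lambda>L. wbar (c L) L k) \<longlonglongrightarrow> wt2 k)"
    using r2 unfolding regular_seq_def by blast
  have wt: "\<And>k. k < K \<Longrightarrow> wt1 k = wt2 k"
    using h1 h2 LIMSEQ_unique by blast
  have gm: "\<And>k. k < K \<Longrightarrow> \<gamma>1 k = \<gamma>2 k"
  proof -
    fix k assume k: "k < K"
    have evQ: "\<forall>\<^sub>F L in sequentially. finite_measure (Qstar \<zeta> (c L) L k) \<and>
        absolutely_continuous \<zeta> (Qstar \<zeta> (c L) L k) \<and> sets (Qstar \<zeta> (c L) L k) = sets \<zeta>"
      using ev1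
    proof eventually_elim
      case (elim L)
      obtain \<omega> q \<alpha> where cL: "c L = (\<omega>, q, \<alpha>)" by (cases "c L") auto
      have "\<forall>j<L. q j \<in> PX \<zeta>" using elim cL unfolding labels_def by auto
      then have qq: "\<forall>j\<in>{j. j < L \<and> \<alpha> j = k}. q j \<in> PX \<zeta>" by auto
      have fin: "finite {j. j < L \<and> \<alpha> j = k}" by simp
      note m = mixmeas[OF fin qq, of "\<lambda>j. \<omega> j / wbar (c L) L k"]
      have "Qstar \<zeta> (c L) L k = measure_of (space \<zeta>) (sets \<zeta>)
          (\<lambda>A. \<Sum>j\<in>{j. j < L \<and> \<alpha> j = k}. ennreal (\<omega> j / wbar (c L) L k) * emeasure (q j) A)"
        unfolding Qstar_def cL by simp
      then show ?case using m by simp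
    qed
    have g1: "\<gamma>1 k \<in> PX \<zeta>" and g2: "\<gamma>2 k \<in> PX \<zeta>" using lab1 lab2 k unfolding labels_def by auto
    show "\<gamma>1 k = \<gamma>2 k"
      by (rule hell_lim_unique[OF sf g1 g2 evQ]) (use h1 h2 k in auto)
  qed
  show ?thesis
  proof (rule pmf_eqI)
    fix \<mu>
    have "pmf \<Lambda>1 \<mu> = (\<Sum>k\<in>{k. k < K \<and> \<gamma>1 k = \<mu>}. wt1 k)" using lab1 unfolding labels_def by blast
    also have "\<dots> = (\<Sum>k\<in>{k. k < K \<and> \<gamma>2 k = \<mu>}. wt2 k)"
    proof (rule sum.cong)
      show "{k. k < K \<and> \<gamma>1 k = \<mu>} = {k. k < K \<and> \<gamma>2 k = \<mu>}" using gm by auto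
    qed (use wt in auto)
    also have "\<dots> = pmf \<Lambda>2 \<mu>" using lab2 unfolding labels_def by metis
    finally show "pmf \<Lambda>1 \<mu> = pmf \<Lambda>2 \<mu>" .
  qed
qed

theorem proposition3:
  fixes X :: "'x::metric_space set" and \<zeta> :: "'x measure"
    and \<Q> :: "'x measure pmf set" and \<LL> :: "'x measure pmf set" and K :: nat
  assumes "base_measure X \<zeta>"
    and "K \<ge> 1"
    and "\<LL> \<subseteq> P2 \<zeta> K"
    and "\<forall>L. inj_on (mix \<zeta>) (QL \<zeta> \<Q> L)"
    and "clusterable \<zeta> \<Q> K \<LL>"
  shows "\<forall>\<Gamma> \<in> mix \<zeta> ` \<LL>. (\<exists>!\<Lambda>. \<Lambda> \<in> \<LL> \<and> mix \<zeta> \<Lambda> = \<Gamma>) \<and>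
           (\<exists>!\<pi>. \<exists>\<Lambda>\<in>\<LL>. mix \<zeta> \<Lambda> = \<Gamma> \<and> \<pi> = bayes_partition \<zeta> \<Lambda>)"
proof
  fix \<Gamma> assume "\<Gamma> \<in> mix \<zeta> ` \<LL>"
  then obtain \<Lambda> where L: "\<Lambda> \<in> \<LL>" "mix \<zeta> \<Lambda> = \<Gamma>" by blast
  have u: "\<And>\<Lambda>'. \<Lambda>' \<in> \<LL> \<Longrightarrow> mix \<zeta> \<Lambda>' = \<Gamma> \<Longrightarrow> \<Lambda>' = \<Lambda>"
    using main_unique[OF assms(1) assms(5)] L by metis
  show "(\<exists>!\<Lambda>. \<Lambda> \<in> \<LL> \<and> mix \<zeta> \<Lambda> = \<Gamma>) \<and>
           (\<exists>!\<pi>. \<exists>\<Lambda>\<in>\<LL>. mix \<zeta> \<Lambda> = \<Gamma> \<and> \<pi> = bayes_partition \<zeta> \<Lambda>)"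
  proof
    show "\<exists>!\<Lambda>. \<Lambda> \<in> \<LL> \<and> mix \<zeta> \<Lambda> = \<Gamma>" using L u by blast
    show "\<exists>!\<pi>. \<exists>\<Lambda>\<in>\<LL>. mix \<zeta> \<Lambda> = \<Gamma> \<and> \<pi> = bayes_partition \<zeta> \<Lambda>"
      using L u by blast
  qed
qed

end
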